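(* For all complex $q$ with $|q|<1$, $$F^{\rm ed}_{\rm od}(q)=\frac{q\,(-q^2;q^2)_\infty}{1-q}\left(2-\frac{(-q;q^2)_\infty}{(-q^2;q^2)_\infty}\right).$$
   Context: For $n\in\mathbb N_0\cup\{\infty\}$, $(a;q)_n:=\prod_{j=0}^{n-1}(1-aq^j)$. Define $$F^{\rm ed}_{\rm od}(q):=\sum_{n=0}^\infty q^{2n+1}(-q;q^2)_n(-q^{2n+2};q^2)_\infty,$$ the generating function for partitions into at least one odd part, with odd parts distinct, and even parts distinct and all larger than every odd part. *)

theory Defs
  imports "HOL-Analysis.Analysis"
begin

definition qpoch :: "complex \<Rightarrow> complex \<Rightarrow> nat \<Rightarrow> complex" where
  "qpoch a q n = (\<Prod>j<n. 1 - a * q ^ j)"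

definition qpoch_inf :: "complex \<Rightarrow> complex \<Rightarrow> complex" where
  "qpoch_inf a q = (\<Prod>j. 1 - a * q ^ j)"

definition F_ed_od :: "complex \<Rightarrow> complex" where
  "F_ed_od q = (\<Sum>n. q ^ (2*n+1) * qpoch (-q) (q^2) n * qpoch_inf (-(q ^ (2*n+2))) (q^2))"

end

theory Submission
  imports Defs
begin

lemma qconv:
  fixes a t :: complex
  assumes "norm t < 1"
  shows "convergent_prod (\<lambda>j. 1 - a * t ^ j)"
proof -
  have "summable (\<lambda>j. norm a * norm t ^ j)"
    using assms by (intro summable_mult summable_geometric) auto
  then have "summable (\<lambda>j. norm ((1 - a * t ^ j) - 1))"
    by (simp add: norm_mult norm_power)
  then show ?thesis
    by (intro abs_convergent_prod_imp_convergent_prod summable_imp_abs_convergent_prod)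
qed

lemma qlim:
  fixes a t :: complex
  assumes "norm t < 1"
  shows "(\<lambda>n. qpoch a t n) \<longlonglongrightarrow> qpoch_inf a t"
proof -
  have "(\<lambda>n. \<Prod>j\<le>n. 1 - a * t ^ j) \<longlonglongrightarrow> qpoch_inf a t"
    unfolding qpoch_inf_def by (rule convergent_prod_LIMSEQ[OF qconv[OF assms]])
  then have "(\<lambda>n. qpoch a t (Suc n)) \<longlonglongrightarrow> qpoch_inf a t"
    by (simp add: qpoch_def lessThan_Suc_atMost)
  then show ?thesis by (rule LIMSEQ_imp_Suc)
qed

lemma factor_nz:
  fixes q t :: complex
  assumes "norm q < 1" "norm t \<le> 1"
  shows "1 + q * t ^ j \<noteq> 0"
proof
  assume "1 + q * t ^ j = 0"
  then have "q * t^j = -1" by (simp add: add_eq_0_iff)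
  then have "norm (q * t^j) = 1" by simp
  moreover have "norm (q * t^j) < 1"
  proof -
    have "norm (q * t^j) = norm q * norm t ^ j"
      by (simp add: norm_mult norm_power)
    also have "\<dots> \<le> norm q" using assms
      by (intro mult_left_le) (auto intro: power_le_one)
    finally show ?thesis using assms by simp
  qed
  ultimately show False by simp
qed

lemma Q_nz:
  fixes q :: complex
  assumes "norm q < 1"
  shows "qpoch (-(q^2)) (q^2) n \<noteq> 0"
proof -
  have "norm (q^2) < 1" using assms by (simp add: norm_power power_less_one_iff)
  then show ?thesis unfolding qpoch_def
    using factor_nz[OF \<open>norm (q^2) < 1\<close>, of "q^2"] by auto
qed

lemma tail:
  fixes q :: complex
  assumes "norm q < 1"
  shows "qpoch_inf (-(q ^ (2*n+2))) (q^2) = qpoch_inf (-(q^2)) (q^2) / qpoch (-(q^2)) (q^2) n"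
proof -
  have t: "norm (q^2) < 1" using assms by (simp add: norm_power power_less_one_iff)
  define f where "f = (\<lambda>j. 1 - (-(q^2)) * (q^2) ^ j)"
  have cp: "convergent_prod f" unfolding f_def by (rule qconv[OF t])
  have nz: "f i \<noteq> 0" for i
    using Q_nz[OF assms, of "Suc i"] by (simp add: qpoch_def f_def)
  have "(\<Prod>i. f (i + n)) = prodinf f / (\<Prod>i<n. f i)"
    by (rule prodinf_divide_initial_segment[OF cp nz])
  moreover have "(\<lambda>i. f (i + n)) = (\<lambda>j. 1 - (-(q ^ (2*n+2))) * (q^2) ^ j)"
  proof -
    have e: "q ^ (2*n+2) = q^2 * (q^2)^n" by (subst power_mult[symmetric]) (simp add: power_add power2_eq_square)
    show ?thesis unfolding e f_def by (simp add: power_add mult_ac)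
  qed
  ultimately show ?thesis unfolding qpoch_inf_def qpoch_def f_def by simp
qed

lemma telescope:
  fixes q :: complex
  assumes "norm q < 1"
  shows "(\<Sum>n<N. q ^ (2*n+1) * (qpoch (-q) (q^2) n / qpoch (-(q^2)) (q^2) n)) =
     2*q/(1-q) - q/(1-q) * (qpoch (-q) (q^2) N / qpoch (-(q^2)) (q^2) N) * (1 + (q^2)^N)"
proof (induction N)
  case 0
  have "q \<noteq> 1" using assms by auto
  then show ?case by (simp add: qpoch_def field_simps)
next
  case (Suc N)
  have q1: "1 - q \<noteq> 0" using assms by auto
  have nz: "qpoch (-(q^2)) (q^2) N \<noteq> 0" by (rule Q_nz[OF assms])
  have nz2: "1 + q^2 * (q^2)^N \<noteq> 0"
    using Q_nz[OF assms, of "Suc N"] by (simp add: qpoch_def)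
  have PS: "qpoch (-q) (q^2) (Suc N) = qpoch (-q) (q^2) N * (1 + q * (q^2)^N)"
    by (simp add: qpoch_def)
  have QS: "qpoch (-(q^2)) (q^2) (Suc N) = qpoch (-(q^2)) (q^2) N * (1 + q^2 * (q^2)^N)"
    by (simp add: qpoch_def)
  have pw: "q ^ (2*N+1) = q * (q^2)^N" by (simp add: power_mult)
  have pw2: "(q^2) ^ Suc N = q^2 * (q^2)^N" by simp
  define x where "x = (q^2)^N"
  define P where "P = qpoch (-q) (q^2) N"
  define Q where "Q = qpoch (-(q^2)) (q^2) N"
  have IH: "(\<Sum>n<N. q ^ (2*n+1) * (qpoch (-q) (q^2) n / qpoch (-(q^2)) (q^2) n)) =
     2*q/(1-q) - q/(1-q) * (P / Q) * (1 + x)" using Suc.IH by (simp add: x_def P_def Q_def)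
  have "2*q/(1-q) - q/(1-q) * (P / Q) * (1 + x) + q * x * (P / Q) =
     2*q/(1-q) - q/(1-q) * (P * (1 + q * x) / (Q * (1 + q^2 * x))) * (1 + q^2 * x)"
  proof -
    define r where "r = q/(1-q)"
    have r0: "r * (1 - q) = q" using q1 unfolding r_def by simp
    have r: "r * q - r + q = 0" using r0 by (simp add: algebra_simps)
    have c: "r * (P * (1 + q * x) / (Q * (1 + q^2 * x))) * (1 + q^2 * x) = r * (P * (1 + q * x) / Q)"
      using nz2 unfolding x_def[symmetric] by simp
    have r2: "2*q/(1-q) = 2*r" unfolding r_def by simp
    have "2*r - r * (P / Q) * (1 + x) + q * x * (P / Q) = 2*r - r * (P * (1 + q * x) / Q)"
    proof -
      have "2*r - r * (P / Q) * (1 + x) + q * x * (P / Q) - (2*r - r * (P * (1 + q * x) / Q))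
        = (P/Q) * x * (r * q - r + q)" using nz unfolding Q_def[symmetric] by (simp add: field_simps)
      then show ?thesis using r by (metis mult_zero_right right_minus_eq)
    qed
    then show ?thesis unfolding r2 r_def[symmetric] c .
  qed
  then show ?case unfolding PS QS pw pw2 sum.lessThan_Suc IH
    by (simp add: x_def P_def Q_def)
qed

theorem theorem1p1:
  fixes q :: complex
  assumes "norm q < 1"
  shows "F_ed_od q =
    q * qpoch_inf (-(q^2)) (q^2) / (1 - q) *
      (2 - qpoch_inf (-q) (q^2) / qpoch_inf (-(q^2)) (q^2))"
proof -
  have t: "norm (q^2) < 1" using assms by (simp add: norm_power power_less_one_iff)
  define A where "A = qpoch_inf (-q) (q^2)"
  define B where "B = qpoch_inf (-(q^2)) (q^2)"
  define c where "c = (\<lambda>n. qpoch (-q) (q^2) n / qpoch (-(q^2)) (q^2) n)"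
  have Bnz: "B \<noteq> 0"
  proof -
    have "(\<lambda>n. qpoch (-(q^2)) (q^2) n) \<longlonglongrightarrow> B" unfolding B_def by (rule qlim[OF t])
    have "B = prodinf (\<lambda>j. 1 - (-(q^2)) * (q^2) ^ j)" by (simp add: B_def qpoch_inf_def)
    moreover have "1 - (-(q^2)) * (q^2) ^ j \<noteq> 0" for j
      using Q_nz[OF assms, of "Suc j"] by (simp add: qpoch_def)
    ultimately show ?thesis using prodinf_nonzero[OF qconv[OF t]] by metis
  qed
  have termeq: "q ^ (2*n+1) * qpoch (-q) (q^2) n * qpoch_inf (-(q ^ (2*n+2))) (q^2)
        = B * (q ^ (2*n+1) * c n)" for n
    using tail[OF assms, of n] by (simp add: B_def c_def)
  have climit: "c \<longlonglongrightarrow> A / B"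
    unfolding c_def A_def B_def
    by (intro tendsto_divide qlim t) (use Bnz B_def in auto)
  have p0: "(\<lambda>N. (q^2)^N) \<longlonglongrightarrow> 0" by (rule LIMSEQ_power_zero[OF t])
  have "(\<lambda>N. B * (2*q/(1-q) - q/(1-q) * c N * (1 + (q^2)^N)))
          \<longlonglongrightarrow> B * (2*q/(1-q) - q/(1-q) * (A/B) * (1 + 0))"
    by (intro tendsto_intros climit p0)
  moreover have "(\<Sum>n<N. B * (q ^ (2*n+1) * c n)) = B * (2*q/(1-q) - q/(1-q) * c N * (1 + (q^2)^N))" for N
    unfolding sum_distrib_left[symmetric] c_def by (subst telescope[OF assms]) (rule refl)
  ultimately have "(\<lambda>N. \<Sum>n<N. B * (q ^ (2*n+1) * c n))
          \<longlonglongrightarrow> B * (2*q/(1-q) - q/(1-q) * (A/B) * (1 + 0))"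
    by simp
  then have "(\<lambda>n. B * (q ^ (2*n+1) * c n)) sums (B * (2*q/(1-q) - q/(1-q) * (A/B) * (1 + 0)))"
    by (simp add: sums_def)
  then have "F_ed_od q = B * (2*q/(1-q) - q/(1-q) * (A/B) * (1 + 0))"
    unfolding F_ed_od_def termeq by (rule sums_unique[symmetric])
  also have "\<dots> = q * B / (1 - q) * (2 - A / B)"
  proof -
    define k where "k = q/(1-q)"
    have BA: "B*(A/B) = A" using Bnz by simp
    have k2: "2*q/(1-q) = 2*k" unfolding k_def by simp
    have e1: "B * (2*q/(1-q) - q/(1-q) * (A/B) * (1 + 0)) = B * (2*k - k*(A/B))"
      by (simp only: k2 k_def[symmetric] add_0_right mult_1_right)
    have e2: "B * (2*k - k*(A/B)) = k * (2*B - B*(A/B))" by (simp only: right_diff_distrib mult_ac)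
    have e3: "q * B / (1 - q) * (2 - A / B) = k * (2*B - B*(A/B))"
    proof -
      have "q * B / (1 - q) = k*B" unfolding k_def by simp
      then have "q * B / (1 - q) * (2 - A / B) = k * (B * (2 - A/B))" by simp
      also have "B * (2 - A/B) = 2*B - B*(A/B)" by (simp only: right_diff_distrib mult.commute)
      finally show ?thesis .
    qed
    show ?thesis by (simp only: e1 e2 e3)
  qed
  finally show ?thesis by (simp add: A_def B_def)
qed

end
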